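(* Let $x_0<\dots<x_n$ and $\hat x_0<\dots<\hat x_n$ be real numbers with $\hat x_0=x_0$, $\hat x_n=x_n$, let $\mathbf{y}\in\mathbb{R}^{n+1}$, $z_k=z_k(\mathbf{x},\hat{\mathbf{x}})$, $\hat c_k:=(\hat x_{k-1}+\hat x_k)/2$ for $1\le k\le n$, and $\hat{\mathbf{v}}:=\{\hat x_k:0\le k\le n\}\cup\{\hat c_k:1\le k\le n\}$. Then \[ \max_{x_0\le t\le x_n}|E(t;\mathbf{y},\mathbf{z})|\le\Lambda(\hat{\mathbf{v}})\max_{1\le k\le n}|E(\hat c_k;\mathbf{y},\mathbf{z})|. \]
   Context: $\lambda_k(\mathbf{x}):=1/\prod_{j\neq k}(x_k-x_j)$; $z_k(\mathbf{x},\hat{\mathbf{x}}):=(\lambda_k(\mathbf{x})-\lambda_k(\hat{\mathbf{x}}))/\lambda_k(\hat{\mathbf{x}})$. For $\mathbf{v}\in\mathbb{R}^{n+1}$, $P_{\mathbf{v}}$ is the polynomial of degree $\le n$ with $P_{\mathbf{v}}(\hat x_k)=v_k$; $E(t;\mathbf{y},\mathbf{z}):=P_{\mathbf{y}\mathbf{z}}(t)-P_{\mathbf{y}}(t)P_{\mathbf{z}}(t)$ with $(\mathbf{yz})_k=y_kz_k$. For a finite set of distinct points $\mathbf{u}\subset[x_0,x_n]$, $\Lambda(\mathbf{u}):=\max_{t\in[x_0,x_n]}\sum_{u\in\mathbf{u}}|\ell_u(t)|$, where $\ell_u$ are the Lagrange polynomials for polynomial interpolation at the points of $\mathbf{u}$.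 *)

theory Defs
  imports Complex_Main
begin

text \<open>Nodes are given as functions nat => real, relevant on indices 0..n.\<close>

definition bary_weight :: "nat \<Rightarrow> (nat \<Rightarrow> real) \<Rightarrow> nat \<Rightarrow> real" where
  "bary_weight n x k = 1 / (\<Prod>j\<in>{0..n} - {k}. (x k - x j))"

definition zrel :: "nat \<Rightarrow> (nat \<Rightarrow> real) \<Rightarrow> (nat \<Rightarrow> real) \<Rightarrow> nat \<Rightarrow> real" where
  "zrel n x xh k = (bary_weight n x k - bary_weight n xh k) / bary_weight n xh k"

definition lagrange_set :: "real set \<Rightarrow> real \<Rightarrow> real \<Rightarrow> real" where
  "lagrange_set U u t = (\<Prod>w\<in>U - {u}. (t - w) / (u - w))"

definition interp :: "nat \<Rightarrow> (nat \<Rightarrow> real) \<Rightarrow> (nat \<Rightarrow> real) \<Rightarrow> real \<Rightarrow> real" where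
  "interp n xh v t = (\<Sum>k\<in>{0..n}. v k * (\<Prod>j\<in>{0..n} - {k}. (t - xh j) / (xh k - xh j)))"

definition interp_err :: "nat \<Rightarrow> (nat \<Rightarrow> real) \<Rightarrow> real \<Rightarrow> (nat \<Rightarrow> real) \<Rightarrow> (nat \<Rightarrow> real) \<Rightarrow> real" where
  "interp_err n xh t y z = interp n xh (\<lambda>k. y k * z k) t - interp n xh y t * interp n xh z t"

definition lebesgue_const :: "real \<Rightarrow> real \<Rightarrow> real set \<Rightarrow> real" where
  "lebesgue_const a b U = (SUP t\<in>{a..b}. (\<Sum>u\<in>U. \<bar>lagrange_set U u t\<bar>))"

end

theory Submission
  imports Defs "HOL-Computational_Algebra.Polynomial"
begin

definition lp :: "'b set \<Rightarrow> ('b \<Rightarrow> real) \<Rightarrow> 'b \<Rightarrow> real poly" where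
  "lp J a k = (\<Prod>j\<in>J - {k}. [:- a j / (a k - a j), 1 / (a k - a j):])"

lemma poly_lp: "poly (lp J a k) t = (\<Prod>j\<in>J - {k}. (t - a j) / (a k - a j))"
  unfolding lp_def poly_prod by (intro prod.cong) (auto simp: diff_divide_distrib)

lemma degree_lp: assumes "finite J" "k \<in> J" shows "degree (lp J a k) \<le> card J - 1"
proof -
  have "degree (lp J a k) \<le> sum (degree \<circ> (\<lambda>j. [:- a j / (a k - a j), 1 / (a k - a j):])) (J - {k})"
    unfolding lp_def using assms by (intro degree_prod_sum_le) auto
  also have "\<dots> \<le> sum (\<lambda>_. 1) (J - {k})"
    by (intro sum_mono) auto
  also have "\<dots> \<le> card J - 1"
    using assms by (simp add: card_Diff_singleton_if)
  finally show ?thesis .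
qed

lemma lag_exact:
  fixes U :: "real set" and p :: "real poly"
  assumes "finite U" "degree p < card U"
  shows "poly p t = (\<Sum>u\<in>U. poly p u * lagrange_set U u t)"
proof -
  define L where "L = (\<Sum>u\<in>U. smult (poly p u) (lp U id u))"
  have pL: "poly L s = (\<Sum>u\<in>U. poly p u * lagrange_set U u s)" for s
    unfolding L_def poly_sum lagrange_set_def by (simp add: poly_lp)
  have dL: "degree L \<le> card U - 1"
    unfolding L_def using assms(1)
    by (intro degree_sum_le) (auto intro!: order.trans[OF degree_smult_le] order.trans[OF degree_lp[of U]])
  have lag01: "lagrange_set U u v = (if v = u then 1 else 0)" if "u \<in> U" "v \<in> U" for u v
  proof (cases "v = u")
    case True then show ?thesis unfolding lagrange_set_def by (auto intro!: prod.neutral)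
  next
    case False
    then have "v \<in> U - {u}" using that by auto
    then show ?thesis unfolding lagrange_set_def using False assms(1)
      by (simp add: prod_zero_iff)
  qed
  have "poly p v = poly L v" if "v \<in> U" for v
  proof -
    have "poly L v = (\<Sum>u\<in>U. if v = u then poly p u else 0)"
      unfolding pL using that by (intro sum.cong refl) (simp add: lag01)
    also have "\<dots> = poly p v" using that assms(1) by (simp add: sum.delta)
    finally show ?thesis by simp
  qed
  moreover have "card U > 0" using assms by auto
  ultimately have "p = L"
    apply (intro poly_eqI_degree[of U])
    subgoal by blast
    subgoal using assms(2) by blast
    subgoal using dL by linarith
    done
  then have "poly p t = poly L t" by simp
  also note pL
  finally show ?thesis .
qed

lemma interp_node:
  assumes inj: "\<And>i j. i \<le> n \<Longrightarrow> j \<le> n \<Longrightarrow> i \<noteq> j \<Longrightarrow> xh i \<noteq> xh j" and "i \<le> n"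
  shows "interp n xh v (xh i) = v i"
proof -
  have "interp n xh v (xh i) = (\<Sum>k\<in>{0..n}. if k = i then v k else 0)"
    unfolding interp_def
  proof (intro sum.cong refl)
    fix k assume k: "k \<in> {0..n}"
    show "v k * (\<Prod>j\<in>{0..n} - {k}. (xh i - xh j) / (xh k - xh j)) = (if k = i then v k else 0)"
    proof (cases "k = i")
      case True
      have "(\<Prod>j\<in>{0..n} - {k}. (xh i - xh j) / (xh k - xh j)) = 1"
        using True assms k by (intro prod.neutral) auto
      then show ?thesis using True by simp
    next
      case False
      have "(\<Prod>j\<in>{0..n} - {k}. (xh i - xh j) / (xh k - xh j)) = 0"
        using False assms k by (subst prod_zero_iff) auto
      then show ?thesis using False by simp
    qed
  qed
  also have "\<dots> = v i" using assms(2) by (simp add: sum.delta')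
  finally show ?thesis .
qed

definition IP :: "nat \<Rightarrow> (nat \<Rightarrow> real) \<Rightarrow> (nat \<Rightarrow> real) \<Rightarrow> real poly" where
  "IP n xh v = (\<Sum>k\<in>{0..n}. smult (v k) (lp {0..n} xh k))"

lemma poly_IP: "poly (IP n xh v) t = interp n xh v t"
  unfolding IP_def interp_def poly_sum by (simp add: poly_lp)

lemma degree_IP: "degree (IP n xh v) \<le> n"
  unfolding IP_def
  by (intro degree_sum_le) (auto intro!: order.trans[OF degree_smult_le] order.trans[OF degree_lp])

theorem lemma3:
  fixes n :: nat and x xh y :: "nat \<Rightarrow> real"
  assumes "n \<ge> 1"
    and "\<And>i j. i < j \<Longrightarrow> j \<le> n \<Longrightarrow> x i < x j"
    and "\<And>i j. i < j \<Longrightarrow> j \<le> n \<Longrightarrow> xh i < xh j"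
    and "xh 0 = x 0" and "xh n = x n"
  shows "\<forall>t\<in>{x 0..x n}.
           \<bar>interp_err n xh t y (zrel n x xh)\<bar>
           \<le> lebesgue_const (x 0) (x n)
                ((xh ` {0..n}) \<union> ((\<lambda>k. (xh (k - 1) + xh k) / 2) ` {1..n}))
             * Max ((\<lambda>k. \<bar>interp_err n xh ((xh (k - 1) + xh k) / 2) y (zrel n x xh)\<bar>) ` {1..n})"
proof
  fix t assume t: "t \<in> {x 0..x n}"
  define z where "z = zrel n x xh"
  define c where "c = (\<lambda>k. (xh (k - 1) + xh k) / 2)"
  define U where "U = (xh ` {0..n}) \<union> (c ` {1..n})"
  define M where "M = Max ((\<lambda>k. \<bar>interp_err n xh (c k) y z\<bar>) ` {1..n})"
  define Q where "Q = IP n xh (\<lambda>k. y k * z k) - IP n xh y * IP n xh z"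
  have mono: "\<And>i j. i < j \<Longrightarrow> j \<le> n \<Longrightarrow> xh i < xh j" by fact
  have inj: "xh i \<noteq> xh j" if "i \<le> n" "j \<le> n" "i \<noteq> j" for i j
    using mono[of i j] mono[of j i] that by (cases "i < j") auto
  have pQ: "poly Q s = interp_err n xh s y z" for s
    unfolding Q_def interp_err_def by (simp add: poly_IP)
  have dQ: "degree Q \<le> 2 * n"
  proof -
    have "degree Q \<le> max (degree (IP n xh (\<lambda>k. y k * z k))) (degree (IP n xh y * IP n xh z))"
      unfolding Q_def by (rule degree_diff_le_max)
    moreover have "degree (IP n xh y * IP n xh z) \<le> n + n"
      using degree_mult_le[of "IP n xh y" "IP n xh z"] degree_IP[of n xh y] degree_IP[of n xh z] by linarith
    ultimately show ?thesis using degree_IP[of n xh "\<lambda>k. y k * z k"] by linarith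
  qed
  have cbetw: "xh (k - 1) < c k \<and> c k < xh k" if "k \<in> {1..n}" for k
    using mono[of "k - 1" k] that unfolding c_def by auto
  have cmono: "c k < c l" if "k \<in> {1..n}" "l \<in> {1..n}" "k < l" for k l
  proof -
    have "xh (k - 1) < xh (l - 1)" using mono[of "k - 1" "l - 1"] that by auto
    moreover have "xh k < xh l" using mono[of k l] that by auto
    ultimately show ?thesis unfolding c_def by simp
  qed
  have injc: "inj_on c {1..n}"
    by (intro inj_onI) (metis cmono less_irrefl linorder_neqE_nat)
  have injx: "inj_on xh {0..n}"
    by (intro inj_onI) (use inj in auto)
  have disj: "xh ` {0..n} \<inter> c ` {1..n} = {}"
  proof (rule ccontr)
    assume "xh ` {0..n} \<inter> c ` {1..n} \<noteq> {}"
    then obtain u where u: "u \<in> xh ` {0..n}" "u \<in> c ` {1..n}" by blast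
    then obtain i where i: "i \<le> n" "u = xh i" by auto
    from u obtain k where k: "k \<in> {1..n}" "u = c k" by auto
    have ik: "i \<le> n" "k \<in> {1..n}" "xh i = c k" using i k by auto
    show False
    proof (cases "i \<le> k - 1")
      case True
      have "k - 1 \<le> n" using ik(2) by auto
      then have "xh i \<le> xh (k - 1)" using mono[of i "k - 1"] True
        by (cases "i = k - 1") (simp_all add: less_imp_le)
      then show False using cbetw[OF ik(2)] ik by auto
    next
      case False
      have "k \<le> i" using False ik(2) by auto
      then have "xh k \<le> xh i" using mono[of k i] ik(1)
        by (cases "i = k") (simp_all add: less_imp_le)
      then show False using cbetw[OF ik(2)] ik by auto
    qed
  qed
  have finU: "finite U" unfolding U_def by auto
  have cardU: "card U = 2 * n + 1"
  proof -
    have "card U = card (xh ` {0..n}) + card (c ` {1..n})"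
      unfolding U_def using disj by (intro card_Un_disjoint) auto
    also have "\<dots> = (n + 1) + n" using card_image[OF injx] card_image[OF injc] by simp
    finally show ?thesis by simp
  qed
  have exact: "poly Q t = (\<Sum>u\<in>U. poly Q u * lagrange_set U u t)"
    using finU dQ cardU by (intro lag_exact) auto
  have Mge: "\<bar>interp_err n xh (c k) y z\<bar> \<le> M" if "k \<in> {1..n}" for k
    unfolding M_def using that by (intro Max_ge) auto
  have M0: "0 \<le> M" using Mge[of 1] assms(1) by (meson abs_ge_zero atLeastAtMost_iff le_refl order.trans)
  have QU: "\<bar>poly Q u\<bar> \<le> M" if "u \<in> U" for u
  proof -
    from that consider (a) i where "i \<le> n" "u = xh i" | (b) k where "k \<in> {1..n}" "u = c k"
      unfolding U_def by auto
    then show ?thesis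
    proof cases
      case a
      have "interp_err n xh u y z = 0"
        using a interp_node[of n xh i] inj unfolding interp_err_def by simp
      then show ?thesis using pQ M0 by simp
    next
      case b then show ?thesis using pQ Mge by simp
    qed
  qed
  define S where "S = (\<lambda>s. \<Sum>u\<in>U. \<bar>lagrange_set U u s\<bar>)"
  have contS: "continuous_on {x 0..x n} S"
    unfolding S_def lagrange_set_def by (intro continuous_intros) auto
  have "x 0 \<le> x n" using t by auto
  then obtain s where "\<forall>r\<in>{x 0..x n}. S r \<le> S s"
    using continuous_attains_sup[OF compact_Icc _ contS] by auto
  then have bdd: "bdd_above (S ` {x 0..x n})" by (intro bdd_aboveI2) blast
  have "\<bar>interp_err n xh t y z\<bar> = \<bar>\<Sum>u\<in>U. poly Q u * lagrange_set U u t\<bar>"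
    using exact pQ by simp
  also have "\<dots> \<le> (\<Sum>u\<in>U. \<bar>poly Q u * lagrange_set U u t\<bar>)" by (rule sum_abs)
  also have "\<dots> \<le> (\<Sum>u\<in>U. M * \<bar>lagrange_set U u t\<bar>)"
    by (intro sum_mono) (auto simp: abs_mult intro!: mult_right_mono QU)
  also have "\<dots> = M * S t" unfolding S_def by (simp add: sum_distrib_left)
  also have "\<dots> \<le> M * lebesgue_const (x 0) (x n) U"
    unfolding lebesgue_const_def S_def[symmetric]
    by (intro mult_left_mono M0 cSUP_upper t bdd)
  finally show "\<bar>interp_err n xh t y (zrel n x xh)\<bar>
           \<le> lebesgue_const (x 0) (x n)
                ((xh ` {0..n}) \<union> ((\<lambda>k. (xh (k - 1) + xh k) / 2) ` {1..n}))
             * Max ((\<lambda>k. \<bar>interp_err n xh ((xh (k - 1) + xh k) / 2) y (zrel n x xh)\<bar>) ` {1..n})"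
    unfolding z_def U_def M_def c_def by (simp add: mult.commute)
qed

end
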